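(* For every $n>3$ and every $\alpha\in\{28,32,44,140\}$, the sensitivity to synchronism of elementary cellular automaton rule $\alpha$ satisfies $\mu(f_{\alpha,n})=\dfrac{2^n-1}{3^n-2^{n+1}+2}$.
   Context: Cells are indexed by $\mathbb{Z}_n=\{0,\dots,n-1\}$, indices modulo $n$. The local rules are $r_{28}(x_1,x_2,x_3)=(\neg x_1\wedge x_2)\vee(x_1\wedge\neg x_2\wedge\neg x_3)$, $r_{32}=x_1\wedge\neg x_2\wedge x_3$, $r_{44}=(\neg x_1\wedge x_2)\vee(x_1\wedge\neg x_2\wedge x_3)$, $r_{140}=x_2\wedge(\neg x_1\vee x_3)$. The global function is $f_{\alpha,n}(x)_i=r_\alpha(x_{i-1},x_i,x_{i+1})$. An update schedule is an ordered partition $\Delta=(\Delta_1,\dots,\Delta_k)$ of $\mathbb{Z}_n$ into nonempty blocks; $\mathcal{P}_n$ is the set of them. For a block $B$ let $f^{(B)}(x)_i=f_{\alpha,n}(x)_i$ if $i\in B$ and $x_i$ otherwise; $f^{(\Delta)}_{\alpha,n}=f^{(\Delta_k)}\circ\cdots\circ f^{(\Delta_1)}$. The dynamics of $\Delta$ is the transition digraph with arcs $(x,f^{(\Delta)}_{\alpha,n}(x))$; $\mathcal{D}(f_{\alpha,n})$ is the set of distinct dynamics over $\Delta\in\mathcal{P}_n$. The sensitivity to synchronism is $\mu(f_{\alpha,n})=|\mathcal{D}(f_{\alpha,n})|/(3^n-2^{n+1}+2)$. *)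

theory Defs
  imports Complex_Main
begin

definition eca_rule :: "nat \<Rightarrow> bool \<Rightarrow> bool \<Rightarrow> bool \<Rightarrow> bool" where
  "eca_rule \<alpha> x1 x2 x3 =
     (if \<alpha> = 28 then (\<not> x1 \<and> x2) \<or> (x1 \<and> \<not> x2 \<and> \<not> x3)
      else if \<alpha> = 32 then x1 \<and> \<not> x2 \<and> x3
      else if \<alpha> = 44 then (\<not> x1 \<and> x2) \<or> (x1 \<and> \<not> x2 \<and> x3)
      else if \<alpha> = 140 then x2 \<and> (\<not> x1 \<or> x3)
      else undefined)"

definition configs :: "nat \<Rightarrow> bool list set" where
  "configs n = {x. length x = n}"

definition global_fun :: "nat \<Rightarrow> nat \<Rightarrow> bool list \<Rightarrow> bool list" where
  "global_fun \<alpha> n x =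
     map (\<lambda>i. eca_rule \<alpha> (x ! ((i + n - 1) mod n)) (x ! i) (x ! ((i + 1) mod n))) [0..<n]"

definition block_update :: "nat \<Rightarrow> nat \<Rightarrow> nat set \<Rightarrow> bool list \<Rightarrow> bool list" where
  "block_update \<alpha> n B x =
     map (\<lambda>i. if i \<in> B then global_fun \<alpha> n x ! i else x ! i) [0..<n]"

definition schedules :: "nat \<Rightarrow> nat set list set" where
  "schedules n = {\<Delta>. (\<forall>B \<in> set \<Delta>. B \<noteq> {}) \<and>
                      (\<forall>i < length \<Delta>. \<forall>j < length \<Delta>. i \<noteq> j \<longrightarrow> \<Delta> ! i \<inter> \<Delta> ! j = {}) \<and>
                      \<Union> (set \<Delta>) = {0..<n}}"

definition sched_update :: "nat \<Rightarrow> nat \<Rightarrow> nat set list \<Rightarrow> bool list \<Rightarrow> bool list" where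
  "sched_update \<alpha> n \<Delta> x = foldl (\<lambda>y B. block_update \<alpha> n B y) x \<Delta>"

definition dynamics :: "nat \<Rightarrow> nat \<Rightarrow> nat set list \<Rightarrow> (bool list \<times> bool list) set" where
  "dynamics \<alpha> n \<Delta> = {(x, sched_update \<alpha> n \<Delta> x) | x. x \<in> configs n}"

definition all_dynamics :: "nat \<Rightarrow> nat \<Rightarrow> (bool list \<times> bool list) set set" where
  "all_dynamics \<alpha> n = dynamics \<alpha> n ` schedules n"

definition sensitivity :: "nat \<Rightarrow> nat \<Rightarrow> real" where
  "sensitivity \<alpha> n = real (card (all_dynamics \<alpha> n)) / (3 ^ n - 2 ^ (n + 1) + 2)"

end

theory Submission
  imports Defs
begin

definition prd :: "nat \<Rightarrow> nat \<Rightarrow> nat" where "prd n i = (i + n - 1) mod n"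
definition sc :: "nat \<Rightarrow> nat \<Rightarrow> nat" where "sc n i = (i + 1) mod n"

lemma prd_alt: "i < n \<Longrightarrow> prd n i = (if i = 0 then n - 1 else i - 1)"
proof (cases "i = 0")
  case True
  assume "i < n" then show ?thesis using True by (simp add: prd_def)
next
  case False
  assume "i < n"
  then have "i + n - 1 = (i - 1) + n" using False by simp
  then have "prd n i = ((i - 1) + n) mod n" by (simp add: prd_def)
  also have "\<dots> = i - 1" using \<open>i < n\<close> by simp
  finally show ?thesis using False by simp
qed

lemma sc_alt: "i < n \<Longrightarrow> sc n i = (if i = n - 1 then 0 else i + 1)"
  by (auto simp: sc_def)

lemma prd_lt: "i < n \<Longrightarrow> prd n i < n" by (auto simp add: prd_alt)
lemma sc_lt: "i < n \<Longrightarrow> sc n i < n" by (auto simp add: sc_alt)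
lemma sc_prd: "i < n \<Longrightarrow> sc n (prd n i) = i" by (auto simp: sc_alt prd_alt)
lemma prd_sc: "i < n \<Longrightarrow> prd n (sc n i) = i" by (auto simp: sc_alt prd_alt)

definition rk :: "nat set list \<Rightarrow> nat \<Rightarrow> nat" where
  "rk \<Delta> j = (SOME m. m < length \<Delta> \<and> j \<in> \<Delta> ! m)"

lemma rk_unique:
  assumes "\<Delta> \<in> schedules n" "m < length \<Delta>" "j \<in> \<Delta> ! m"
  shows "rk \<Delta> j = m"
proof -
  have ex: "\<exists>m. m < length \<Delta> \<and> j \<in> \<Delta> ! m" using assms by blast
  have "rk \<Delta> j < length \<Delta> \<and> j \<in> \<Delta> ! rk \<Delta> j"
    unfolding rk_def by (rule someI_ex[OF ex])
  then show ?thesis using assms unfolding schedules_def by blast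
qed

lemma rk_props:
  assumes "\<Delta> \<in> schedules n" "j < n"
  shows "rk \<Delta> j < length \<Delta>" "\<And>m. m < length \<Delta> \<Longrightarrow> j \<in> \<Delta> ! m \<longleftrightarrow> rk \<Delta> j = m"
proof -
  have "j \<in> \<Union> (set \<Delta>)" using assms unfolding schedules_def by auto
  then have ex: "\<exists>m. m < length \<Delta> \<and> j \<in> \<Delta> ! m" by (metis UnionE in_set_conv_nth)
  have *: "rk \<Delta> j < length \<Delta> \<and> j \<in> \<Delta> ! rk \<Delta> j"
    unfolding rk_def by (rule someI_ex[OF ex])
  then show "rk \<Delta> j < length \<Delta>" by simp
  fix m assume "m < length \<Delta>"
  then show "j \<in> \<Delta> ! m \<longleftrightarrow> rk \<Delta> j = m" using * rk_unique[OF assms(1)] by blast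
qed

definition gen_eq :: "nat \<Rightarrow> nat \<Rightarrow> (nat \<Rightarrow> nat) \<Rightarrow> bool list \<Rightarrow> bool list \<Rightarrow> bool" where
  "gen_eq \<alpha> n \<rho> x F \<longleftrightarrow> length F = n \<and> (\<forall>i<n. F ! i = eca_rule \<alpha>
      (if \<rho> (prd n i) < \<rho> i then F ! prd n i else x ! prd n i) (x ! i)
      (if \<rho> (sc n i) < \<rho> i then F ! sc n i else x ! sc n i))"

lemma global_fun_nth: "i < n \<Longrightarrow> global_fun \<alpha> n y ! i = eca_rule \<alpha> (y ! prd n i) (y ! i) (y ! sc n i)"
  by (simp add: global_fun_def prd_def sc_def)

lemma block_update_nth: "i < n \<Longrightarrow> block_update \<alpha> n B y ! i =
   (if i \<in> B then eca_rule \<alpha> (y ! prd n i) (y ! i) (y ! sc n i) else y ! i)"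
  by (simp add: block_update_def global_fun_nth)

lemma sched_gen:
  assumes S: "\<Delta> \<in> schedules n" and x: "length x = n"
  shows "gen_eq \<alpha> n (rk \<Delta>) x (sched_update \<alpha> n \<Delta> x)"
proof -
  let ?\<rho> = "rk \<Delta>"
  define Y where "Y m = foldl (\<lambda>y B. block_update \<alpha> n B y) x (take m \<Delta>)" for m
  have inv: "length (Y m) = n \<and> (\<forall>j<n. (m \<le> ?\<rho> j \<longrightarrow> Y m ! j = x ! j) \<and>
      (?\<rho> j < m \<longrightarrow> Y m ! j = eca_rule \<alpha>
      (if ?\<rho> (prd n j) < ?\<rho> j then Y m ! prd n j else x ! prd n j) (x ! j)
      (if ?\<rho> (sc n j) < ?\<rho> j then Y m ! sc n j else x ! sc n j)))" if "m \<le> length \<Delta>" for m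
    using that
  proof (induction m)
    case 0
    then show ?case using x by (simp add: Y_def)
  next
    case (Suc m)
    then have m: "m < length \<Delta>" by simp
    have YS: "Y (Suc m) = block_update \<alpha> n (\<Delta> ! m) (Y m)"
      using m by (simp add: Y_def take_Suc_conv_app_nth)
    have IH: "length (Y m) = n" "\<And>j. j < n \<Longrightarrow> m \<le> ?\<rho> j \<Longrightarrow> Y m ! j = x ! j"
      "\<And>j. j < n \<Longrightarrow> ?\<rho> j < m \<Longrightarrow> Y m ! j = eca_rule \<alpha>
      (if ?\<rho> (prd n j) < ?\<rho> j then Y m ! prd n j else x ! prd n j) (x ! j)
      (if ?\<rho> (sc n j) < ?\<rho> j then Y m ! sc n j else x ! sc n j)"
      using Suc by auto
    have len: "length (Y (Suc m)) = n" using YS IH(1) by (simp add: block_update_def)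
    have nth: "Y (Suc m) ! j = (if ?\<rho> j = m then eca_rule \<alpha> (Y m ! prd n j) (Y m ! j) (Y m ! sc n j) else Y m ! j)"
      if "j < n" for j
      using YS block_update_nth[OF that] rk_props(2)[OF S that m] by simp
    have same: "Y (Suc m) ! j = Y m ! j" if "j < n" "?\<rho> j \<noteq> m" for j
      using nth that by simp
    show ?case
    proof (intro conjI allI impI)
      show "length (Y (Suc m)) = n" by (rule len)
    next
      fix j assume j: "j < n" "Suc m \<le> ?\<rho> j"
      then show "Y (Suc m) ! j = x ! j" using same IH(2) by simp
    next
      fix j assume j: "j < n" "?\<rho> j < Suc m"
      have pj: "prd n j < n" and sj: "sc n j < n" using j by (auto simp: prd_lt sc_lt)
      show "Y (Suc m) ! j = eca_rule \<alpha>
        (if ?\<rho> (prd n j) < ?\<rho> j then Y (Suc m) ! prd n j else x ! prd n j) (x ! j)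
        (if ?\<rho> (sc n j) < ?\<rho> j then Y (Suc m) ! sc n j else x ! sc n j)"
      proof (cases "?\<rho> j = m")
        case True
        have a: "Y m ! prd n j = (if ?\<rho> (prd n j) < ?\<rho> j then Y (Suc m) ! prd n j else x ! prd n j)"
          using True IH(2)[OF pj] same[OF pj] by auto
        have b: "Y m ! sc n j = (if ?\<rho> (sc n j) < ?\<rho> j then Y (Suc m) ! sc n j else x ! sc n j)"
          using True IH(2)[OF sj] same[OF sj] by auto
        show ?thesis using nth[OF j(1)] True a b IH(2)[OF j(1)] by simp
      next
        case False
        then have lt: "?\<rho> j < m" using j by simp
        have a: "?\<rho> (prd n j) < ?\<rho> j \<Longrightarrow> Y (Suc m) ! prd n j = Y m ! prd n j"
          using same[OF pj] lt by simp
        have b: "?\<rho> (sc n j) < ?\<rho> j \<Longrightarrow> Y (Suc m) ! sc n j = Y m ! sc n j"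
          using same[OF sj] lt by simp
        show ?thesis using same[OF j(1) False] IH(3)[OF j(1) lt] a b by simp
      qed
    qed
  qed
  have "length (Y (length \<Delta>)) = n \<and> (\<forall>j<n. ?\<rho> j < length \<Delta> \<longrightarrow> Y (length \<Delta>) ! j = eca_rule \<alpha>
      (if ?\<rho> (prd n j) < ?\<rho> j then Y (length \<Delta>) ! prd n j else x ! prd n j) (x ! j)
      (if ?\<rho> (sc n j) < ?\<rho> j then Y (length \<Delta>) ! sc n j else x ! sc n j))"
    using inv[of "length \<Delta>"] by simp
  moreover have "Y (length \<Delta>) = sched_update \<alpha> n \<Delta> x" by (simp add: Y_def sched_update_def)
  ultimately show ?thesis unfolding gen_eq_def using rk_props(1)[OF S] by simp
qed

lemma gen_nth: "gen_eq \<alpha> n \<rho> x F \<Longrightarrow> i < n \<Longrightarrow> F ! i = eca_rule \<alpha>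
      (if \<rho> (prd n i) < \<rho> i then F ! prd n i else x ! prd n i) (x ! i)
      (if \<rho> (sc n i) < \<rho> i then F ! sc n i else x ! sc n i)"
  unfolding gen_eq_def by blast

lemma gen_L: assumes "gen_eq \<alpha> n \<rho> x F" "i < n" "\<rho> (prd n i) < \<rho> i"
  shows "F ! prd n i = eca_rule \<alpha>
      (if \<rho> (prd n (prd n i)) < \<rho> (prd n i) then F ! prd n (prd n i) else x ! prd n (prd n i)) (x ! prd n i) (x ! i)"
  using gen_nth[OF assms(1) prd_lt[OF assms(2)]] assms(3) by (simp add: sc_prd[OF assms(2)])

lemma gen_R: assumes "gen_eq \<alpha> n \<rho> x F" "i < n" "\<rho> (sc n i) < \<rho> i"
  shows "F ! sc n i = eca_rule \<alpha> (x ! i) (x ! sc n i)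
      (if \<rho> (sc n (sc n i)) < \<rho> (sc n i) then F ! sc n (sc n i) else x ! sc n (sc n i))"
  using gen_nth[OF assms(1) sc_lt[OF assms(2)]] assms(3) by (simp add: prd_sc[OF assms(2)])

lemma red28: assumes "gen_eq 28 n \<rho> x F" "i < n"
  shows "F ! i = (if (if \<rho> (prd n i) < \<rho> i then F ! prd n i else x ! prd n i)
                  then \<not> x ! i \<and> \<not> x ! sc n i else x ! i)"
proof (cases "\<rho> (sc n i) < \<rho> i")
  case True
  show ?thesis using gen_nth[OF assms] gen_R[OF assms True] True by (auto simp: eca_rule_def split: if_splits)
next
  case False
  show ?thesis using gen_nth[OF assms] False by (simp add: eca_rule_def)
qed

lemma red44: assumes "gen_eq 44 n \<rho> x F" "i < n"
  shows "F ! i = (if (if \<rho> (prd n i) < \<rho> i then F ! prd n i else x ! prd n i)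
                  then \<not> x ! i \<and> x ! sc n i else x ! i)"
proof (cases "\<rho> (sc n i) < \<rho> i")
  case True
  show ?thesis using gen_nth[OF assms] gen_R[OF assms True] True by (auto simp: eca_rule_def split: if_splits)
next
  case False
  show ?thesis using gen_nth[OF assms] False by (simp add: eca_rule_def)
qed

lemma red140: assumes "gen_eq 140 n \<rho> x F" "i < n"
  shows "F ! i = (x ! i \<and> (\<not> x ! prd n i \<or> (if \<rho> (sc n i) < \<rho> i then F ! sc n i else x ! sc n i)))"
proof (cases "\<rho> (prd n i) < \<rho> i")
  case True
  show ?thesis using gen_nth[OF assms] gen_L[OF assms True] True by (auto simp: eca_rule_def split: if_splits)
next
  case False
  show ?thesis using gen_nth[OF assms] False by (simp add: eca_rule_def)
qed

lemma red32: assumes "gen_eq 32 n \<rho> x F" "i < n"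
  shows "F ! i = (\<not> (\<rho> (prd n i) < \<rho> i \<or> \<rho> (sc n i) < \<rho> i) \<and> x ! prd n i \<and> \<not> x ! i \<and> x ! sc n i)"
proof (cases "\<rho> (prd n i) < \<rho> i")
  case True
  show ?thesis using gen_nth[OF assms] gen_L[OF assms True] True by (auto simp: eca_rule_def split: if_splits)
next
  case False
  note F = False
  show ?thesis
  proof (cases "\<rho> (sc n i) < \<rho> i")
    case True
    show ?thesis using gen_nth[OF assms] gen_R[OF assms True] True F by (auto simp: eca_rule_def split: if_splits)
  next
    case False
    show ?thesis using gen_nth[OF assms] False F by (simp add: eca_rule_def)
  qed
qed

lemma gen_F_imp_x140: "gen_eq 140 n \<rho> x F \<Longrightarrow> i < n \<Longrightarrow> F ! i \<Longrightarrow> x ! i"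
  using red140 by blast

lemma chain_unique:
  fixes \<rho> :: "nat \<Rightarrow> nat"
  assumes lF: "length F = n" and lG: "length G = n"
    and nb: "\<And>i. i < n \<Longrightarrow> nb i < n"
    and K: "\<And>i. i < n \<Longrightarrow> K i \<Longrightarrow> \<rho> (nb i) < \<rho> i"
    and eF: "\<And>i. i < n \<Longrightarrow> F ! i = \<Phi> i (if K i then F ! nb i else c i)"
    and eG: "\<And>i. i < n \<Longrightarrow> G ! i = \<Phi> i (if K i then G ! nb i else c i)"
  shows "F = G"
proof -
  have "\<forall>i. \<rho> i = k \<longrightarrow> i < n \<longrightarrow> F ! i = G ! i" for k
  proof (induction k rule: less_induct)
    case (less k)
    show ?case
    proof (intro allI impI)
      fix i assume i: "\<rho> i = k" "i < n"
      show "F ! i = G ! i"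
      proof (cases "K i")
        case True
        then have "F ! nb i = G ! nb i" using less K[OF i(2)] nb[OF i(2)] i(1) by blast
        then show ?thesis using eF[OF i(2)] eG[OF i(2)] by simp
      next
        case False
        then show ?thesis using eF[OF i(2)] eG[OF i(2)] by simp
      qed
    qed
  qed
  then show ?thesis using lF lG by (intro nth_equalityI) auto
qed

lemma prd_inj: "a < n \<Longrightarrow> b < n \<Longrightarrow> prd n a = prd n b \<Longrightarrow> a = b"
  by (metis sc_prd)

lemma cells:
  assumes n: "3 < n" and i: "i < n"
  shows "prd n i \<noteq> i" "sc n i \<noteq> i" "prd n (prd n i) \<noteq> i" "prd n (prd n i) \<noteq> sc n i"
    "prd n (prd n i) \<noteq> prd n i" "prd n (prd n (prd n i)) \<noteq> prd n (prd n i)"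
    "prd n (prd n (prd n i)) \<noteq> i" "prd n (prd n (prd n i)) \<noteq> prd n i"
    "sc n (sc n i) \<noteq> i" "sc n (sc n i) \<noteq> sc n i" "sc n (sc n i) \<noteq> prd n i"
    "sc n i \<noteq> prd n i"
    "n = 4 \<Longrightarrow> prd n (prd n (prd n i)) = sc n i"
    "4 < n \<Longrightarrow> prd n (prd n (prd n (prd n i))) \<noteq> i"
    "4 < n \<Longrightarrow> prd n (prd n (prd n (prd n i))) \<noteq> prd n (prd n i)"
proof -
  let ?p = "prd n i" and ?pp = "prd n (prd n i)" and ?ppp = "prd n (prd n (prd n i))"
    and ?pppp = "prd n (prd n (prd n (prd n i)))" and ?s = "sc n i" and ?ss = "sc n (sc n i)"
  have l1: "?p < n" "?pp < n" "?ppp < n" "?s < n" "?ss < n" using i by (simp_all add: prd_lt sc_lt)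
  have e1: "?p = (if 1 \<le> i then i - 1 else n + i - 1)" using i by (auto simp: prd_alt)
  have e2: "?pp = (if 2 \<le> i then i - 2 else n + i - 2)"
    using e1 prd_alt[OF l1(1)] n i by (auto split: if_splits)
  have e3: "?ppp = (if 3 \<le> i then i - 3 else n + i - 3)"
    using e2 prd_alt[OF l1(2)] n i by (auto split: if_splits)
  have e4: "?pppp = (if 4 \<le> i then i - 4 else n + i - 4)"
    using e3 prd_alt[OF l1(3)] n i by (auto split: if_splits)
  have ps: "prd n ?s = i" "prd n ?ss = ?s" using i l1 by (simp_all add: prd_sc)
  show a1: "?p \<noteq> i" using e1 n i by auto
  show a2: "?pp \<noteq> i" using e2 n i by auto
  show a3: "?pp \<noteq> ?p" using e1 e2 n i by auto
  show a4: "?ppp \<noteq> ?pp" using e3 e2 n i by auto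
  show a5: "?ppp \<noteq> i" using e3 n i by auto
  show a6: "?ppp \<noteq> ?p" using e3 e1 n i by auto
  show "4 < n \<Longrightarrow> ?pppp \<noteq> i" using e4 n i by auto
  show "4 < n \<Longrightarrow> ?pppp \<noteq> ?pp" using e4 e2 n i by auto
  show "?s \<noteq> i" using ps a1 by metis
  show "?pp \<noteq> ?s" using ps a5 by metis
  show "?ss \<noteq> i" using ps a2 by metis
  show "?ss \<noteq> ?s" using ps a1 by metis
  show "?s \<noteq> ?p" using ps a2 by metis
  show "?ss \<noteq> ?p" using ps a5 by metis
  show "n = 4 \<Longrightarrow> ?ppp = ?s"
  proof -
    assume n4: "n = 4"
    have "?pppp = i" using e4 n4 i by auto
    then have "prd n ?ppp = prd n ?s" using ps by simp
    then show ?thesis using prd_inj l1 by blast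
  qed
qed

lemma wit140:
  assumes n: "3 < n" and i: "i < n"
    and G1: "gen_eq 140 n \<rho>1 x F1" and G2: "gen_eq 140 n \<rho>2 x F2"
    and K1: "\<rho>1 (sc n i) < \<rho>1 i" and K2: "\<not> \<rho>2 (sc n i) < \<rho>2 i"
    and x: "x = map (\<lambda>j. j = prd n i \<or> j = i \<or> j = sc n i) [0..<n]"
  shows "F1 ! i \<noteq> F2 ! i"
proof -
  let ?p = "prd n i" and ?s = "sc n i" and ?s2 = "sc n (sc n i)"
  have lt: "?p < n" "?s < n" "?s2 < n" using i by (auto simp: prd_lt sc_lt)
  have xv: "\<And>j. j < n \<Longrightarrow> x ! j = (j = ?p \<or> j = i \<or> j = ?s)" using x by simp
  note c = cells[OF n i]
  have x1: "x ! ?p" "x ! i" "x ! ?s" "\<not> x ! ?s2" using xv lt i c by auto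
  have f1: "\<not> F1 ! ?s2" using red140[OF G1 lt(3)] x1 by simp
  have f2: "\<not> F1 ! ?s" using red140[OF G1 lt(2)] x1 f1 prd_sc[OF i] by simp
  have "\<not> F1 ! i" using red140[OF G1 i] x1 f2 K1 by simp
  moreover have "F2 ! i" using red140[OF G2 i] x1 K2 by simp
  ultimately show ?thesis by blast
qed

lemma wit28:
  assumes n: "3 < n" and i: "i < n"
    and G1: "gen_eq 28 n \<rho>1 x F1" and G2: "gen_eq 28 n \<rho>2 x F2"
    and K1: "\<rho>1 (prd n i) < \<rho>1 i" and K2: "\<not> \<rho>2 (prd n i) < \<rho>2 i"
    and x: "x = map (\<lambda>j. j = prd n (prd n i)) [0..<n]"
  shows "F1 ! i \<noteq> F2 ! i"
proof -
  let ?p = "prd n i" and ?pp = "prd n (prd n i)" and ?ppp = "prd n (prd n (prd n i))" and ?s = "sc n i"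
  have lt: "?p < n" "?pp < n" "?ppp < n" "?s < n" using i by (auto simp: prd_lt sc_lt)
  have xv: "\<And>j. j < n \<Longrightarrow> x ! j = (j = ?pp)" using x by simp
  note c = cells[OF n i]
  have x1: "\<not> x ! ?p" "\<not> x ! i" "x ! ?pp" "\<not> x ! ?s" "\<not> x ! ?ppp" using xv lt i c by auto
  have sp: "sc n ?ppp = ?pp" "sc n ?pp = ?p" "sc n ?p = i" using lt i by (auto simp: sc_prd)
  have chain: "F ! ?p" if G: "gen_eq 28 n \<rho> x F" for \<rho> F
  proof -
    have "\<not> F ! ?ppp" using red28[OF G lt(3)] x1 sp by simp
    then have "F ! ?pp" using red28[OF G lt(2)] x1 sp by simp
    then show "F ! ?p" using red28[OF G lt(1)] x1 sp by simp
  qed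
  have "F1 ! i" using red28[OF G1 i] x1 chain[OF G1] K1 by simp
  moreover have "\<not> F2 ! i" using red28[OF G2 i] x1 K2 by simp
  ultimately show ?thesis by blast
qed

lemma wit44A:
  assumes n: "3 < n" and i: "i < n"
    and G1: "gen_eq 44 n \<rho>1 x F1" and G2: "gen_eq 44 n \<rho>2 x F2"
    and K1: "\<rho>1 (prd n i) < \<rho>1 i" and K2: "\<not> \<rho>2 (prd n i) < \<rho>2 i"
    and K1': "\<not> \<rho>1 (prd n (prd n i)) < \<rho>1 (prd n i)"
    and x: "x = map (\<lambda>j. j = prd n (prd n i) \<or> j = prd n i \<or> j = sc n i) [0..<n]"
  shows "F1 ! i \<noteq> F2 ! i"
proof -
  let ?p = "prd n i" and ?pp = "prd n (prd n i)" and ?s = "sc n i"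
  have lt: "?p < n" "?pp < n" "?s < n" using i by (auto simp: prd_lt sc_lt)
  have xv: "\<And>j. j < n \<Longrightarrow> x ! j = (j = ?pp \<or> j = ?p \<or> j = ?s)" using x by simp
  note c = cells[OF n i]
  have x1: "x ! ?p" "\<not> x ! i" "x ! ?pp" "x ! ?s" using xv lt i c by auto
  have sp: "sc n ?pp = ?p" "sc n ?p = i" using lt i by (auto simp: sc_prd)
  have "\<not> F1 ! ?p" using red44[OF G1 lt(1)] x1 sp K1' by simp
  then have "\<not> F1 ! i" using red44[OF G1 i] x1 K1 by simp
  moreover have "F2 ! i" using red44[OF G2 i] x1 K2 by simp
  ultimately show ?thesis by blast
qed

lemma wit44B:
  assumes n: "n = 4" and i: "i < n"
    and G1: "gen_eq 44 n \<rho>1 x F1" and G2: "gen_eq 44 n \<rho>2 x F2"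
    and K1: "\<rho>1 (prd n i) < \<rho>1 i" and K2: "\<not> \<rho>2 (prd n i) < \<rho>2 i"
    and K1': "\<rho>1 (prd n (prd n i)) < \<rho>1 (prd n i)"
    and x: "x = map (\<lambda>j. j = prd n i \<or> j = sc n i) [0..<n]"
  shows "F1 ! i \<noteq> F2 ! i"
proof -
  have n3: "3 < n" using n by simp
  let ?p = "prd n i" and ?pp = "prd n (prd n i)" and ?ppp = "prd n (prd n (prd n i))" and ?s = "sc n i"
  have lt: "?p < n" "?pp < n" "?s < n" using i by (auto simp: prd_lt sc_lt)
  have xv: "\<And>j. j < n \<Longrightarrow> x ! j = (j = ?p \<or> j = ?s)" using x by simp
  note c = cells[OF n3 i]
  have e3: "?ppp = ?s" using c(13) n by simp
  have x1: "x ! ?p" "\<not> x ! i" "\<not> x ! ?pp" "x ! ?s" using xv lt i c by auto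
  have sp: "sc n ?pp = ?p" "sc n ?p = i" "prd n ?s = i" using lt i by (auto simp: sc_prd prd_sc)
  have "F1 ! ?pp"
  proof (cases "\<rho>1 ?ppp < \<rho>1 ?pp")
    case True
    then have "\<not> \<rho>1 (prd n ?s) < \<rho>1 ?s" using K1 K1' e3 sp by simp
    then have "F1 ! ?s" using red44[OF G1 lt(3)] x1 sp by simp
    then show ?thesis using red44[OF G1 lt(2)] x1 sp True e3 by simp
  next
    case False
    then show ?thesis using red44[OF G1 lt(2)] x1 sp e3 by simp
  qed
  then have "\<not> F1 ! ?p" using red44[OF G1 lt(1)] x1 sp K1' by simp
  then have "\<not> F1 ! i" using red44[OF G1 i] x1 K1 by simp
  moreover have "F2 ! i" using red44[OF G2 i] x1 K2 by simp
  ultimately show ?thesis by blast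
qed

lemma wit44C:
  assumes n: "4 < n" and i: "i < n"
    and G1: "gen_eq 44 n \<rho>1 x F1" and G2: "gen_eq 44 n \<rho>2 x F2"
    and K1: "\<rho>1 (prd n i) < \<rho>1 i" and K2: "\<not> \<rho>2 (prd n i) < \<rho>2 i"
    and x: "x = map (\<lambda>j. j = prd n (prd n i) \<or> j = i) [0..<n]"
  shows "F1 ! i \<noteq> F2 ! i"
proof -
  have n3: "3 < n" using n by simp
  let ?p = "prd n i" and ?pp = "prd n (prd n i)" and ?ppp = "prd n (prd n (prd n i))"
    and ?pppp = "prd n (prd n (prd n (prd n i)))"
  have lt: "?p < n" "?pp < n" "?ppp < n" "?pppp < n" using i by (auto simp: prd_lt)
  have xv: "\<And>j. j < n \<Longrightarrow> x ! j = (j = ?pp \<or> j = i)" using x by simp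
  note c = cells[OF n3 i]
  have x1: "\<not> x ! ?p" "x ! i" "x ! ?pp" "\<not> x ! ?ppp" "\<not> x ! ?pppp" using xv lt i c n by auto
  have sp: "sc n ?pppp = ?ppp" "sc n ?ppp = ?pp" "sc n ?pp = ?p" "sc n ?p = i" using lt i by (auto simp: sc_prd)
  have chain: "F ! ?p" if G: "gen_eq 44 n \<rho> x F" for \<rho> F
  proof -
    have "\<not> F ! ?pppp" using red44[OF G lt(4)] x1 sp by simp
    then have "\<not> F ! ?ppp" using red44[OF G lt(3)] x1 sp by simp
    then have "F ! ?pp" using red44[OF G lt(2)] x1 sp by simp
    then show "F ! ?p" using red44[OF G lt(1)] x1 sp by simp
  qed
  have "\<not> F1 ! i" using red44[OF G1 i] x1 chain[OF G1] K1 by simp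
  moreover have "F2 ! i" using red44[OF G2 i] x1 K2 by simp
  ultimately show ?thesis by blast
qed

lemma wit32:
  assumes n: "3 < n" and i: "i < n"
    and G1: "gen_eq 32 n \<rho>1 x F1" and G2: "gen_eq 32 n \<rho>2 x F2"
    and K1: "\<rho>1 (prd n i) < \<rho>1 i \<or> \<rho>1 (sc n i) < \<rho>1 i"
    and K2: "\<not> (\<rho>2 (prd n i) < \<rho>2 i \<or> \<rho>2 (sc n i) < \<rho>2 i)"
    and x: "x = map (\<lambda>j. j = prd n i \<or> j = sc n i) [0..<n]"
  shows "F1 ! i \<noteq> F2 ! i"
proof -
  let ?p = "prd n i" and ?s = "sc n i"
  have lt: "?p < n" "?s < n" using i by (auto simp: prd_lt sc_lt)
  have xv: "\<And>j. j < n \<Longrightarrow> x ! j = (j = ?p \<or> j = ?s)" using x by simp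
  note c = cells[OF n i]
  have x1: "x ! ?p" "\<not> x ! i" "x ! ?s" using xv lt i c by auto
  have "\<not> F1 ! i" using red32[OF G1 i] K1 by simp
  moreover have "F2 ! i" using red32[OF G2 i] x1 K2 by simp
  ultimately show ?thesis by blast
qed

definition keyv :: "nat \<Rightarrow> nat \<Rightarrow> (nat \<Rightarrow> nat) \<Rightarrow> nat \<Rightarrow> bool" where
  "keyv \<alpha> n \<rho> i = (if \<alpha> = 140 then \<rho> (sc n i) < \<rho> i
      else if \<alpha> = 32 then (\<rho> (prd n i) < \<rho> i \<or> \<rho> (sc n i) < \<rho> i)
      else \<rho> (prd n i) < \<rho> i)"

lemma same_key:
  assumes a: "\<alpha> \<in> {28, 32, 44, 140}"
    and G1: "gen_eq \<alpha> n \<rho>1 x F1" and G2: "gen_eq \<alpha> n \<rho>2 x F2"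
    and K: "\<And>i. i < n \<Longrightarrow> keyv \<alpha> n \<rho>1 i = keyv \<alpha> n \<rho>2 i"
  shows "F1 = F2"
proof -
  have l1: "length F1 = n" and l2: "length F2 = n" using G1 G2 by (auto simp: gen_eq_def)
  consider "\<alpha> = 28" | "\<alpha> = 44" | "\<alpha> = 140" | "\<alpha> = 32" using a by auto
  then show ?thesis
  proof cases
    case 1
    have KL: "\<And>i. i < n \<Longrightarrow> (\<rho>2 (prd n i) < \<rho>2 i) = (\<rho>1 (prd n i) < \<rho>1 i)"
      using K 1 by (simp add: keyv_def)
    show ?thesis
      apply (rule chain_unique[where n = n and \<rho> = \<rho>1 and nb = "prd n" and K = "\<lambda>i. \<rho>1 (prd n i) < \<rho>1 i"
            and \<Phi> = "\<lambda>i v. if v then \<not> x ! i \<and> \<not> x ! sc n i else x ! i" and c = "\<lambda>i. x ! prd n i"])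
      subgoal using l1 by simp
      subgoal using l2 by simp
      subgoal by (rule prd_lt)
      subgoal by simp
      subgoal for i using red28[OF G1[unfolded 1], of i] by simp
      subgoal for i using red28[OF G2[unfolded 1], of i] KL[of i] by simp
      done
  next
    case 2
    have KL: "\<And>i. i < n \<Longrightarrow> (\<rho>2 (prd n i) < \<rho>2 i) = (\<rho>1 (prd n i) < \<rho>1 i)"
      using K 2 by (simp add: keyv_def)
    show ?thesis
      apply (rule chain_unique[where n = n and \<rho> = \<rho>1 and nb = "prd n" and K = "\<lambda>i. \<rho>1 (prd n i) < \<rho>1 i"
            and \<Phi> = "\<lambda>i v. if v then \<not> x ! i \<and> x ! sc n i else x ! i" and c = "\<lambda>i. x ! prd n i"])
      subgoal using l1 by simp
      subgoal using l2 by simp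
      subgoal by (rule prd_lt)
      subgoal by simp
      subgoal for i using red44[OF G1[unfolded 2], of i] by simp
      subgoal for i using red44[OF G2[unfolded 2], of i] KL[of i] by simp
      done
  next
    case 3
    have KR: "\<And>i. i < n \<Longrightarrow> (\<rho>2 (sc n i) < \<rho>2 i) = (\<rho>1 (sc n i) < \<rho>1 i)"
      using K 3 by (simp add: keyv_def)
    show ?thesis
      apply (rule chain_unique[where n = n and \<rho> = \<rho>1 and nb = "sc n" and K = "\<lambda>i. \<rho>1 (sc n i) < \<rho>1 i"
            and \<Phi> = "\<lambda>i v. x ! i \<and> (\<not> x ! prd n i \<or> v)" and c = "\<lambda>i. x ! sc n i"])
      subgoal using l1 by simp
      subgoal using l2 by simp
      subgoal by (rule sc_lt)
      subgoal by simp
      subgoal for i using red140[OF G1[unfolded 3], of i] by simp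
      subgoal for i using red140[OF G2[unfolded 3], of i] KR[of i] by simp
      done
  next
    case 4
    have KZ: "\<And>i. i < n \<Longrightarrow> (\<rho>2 (prd n i) < \<rho>2 i \<or> \<rho>2 (sc n i) < \<rho>2 i) =
                 (\<rho>1 (prd n i) < \<rho>1 i \<or> \<rho>1 (sc n i) < \<rho>1 i)"
      using K 4 by (simp add: keyv_def)
    show ?thesis
      using l1 l2 red32[OF G1[unfolded 4]] red32[OF G2[unfolded 4]] KZ by (intro nth_equalityI) auto
  qed
qed

lemma diff_key:
  assumes a: "\<alpha> \<in> {28, 32, 44, 140}" and n: "3 < n" and i: "i < n"
    and S1: "\<Delta>1 \<in> schedules n" and S2: "\<Delta>2 \<in> schedules n"
    and K1: "keyv \<alpha> n (rk \<Delta>1) i" and K2: "\<not> keyv \<alpha> n (rk \<Delta>2) i"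
  shows "\<exists>x \<in> configs n. sched_update \<alpha> n \<Delta>1 x \<noteq> sched_update \<alpha> n \<Delta>2 x"
proof -
  have G: "gen_eq \<alpha> n (rk \<Delta>) x (sched_update \<alpha> n \<Delta> x)" if "\<Delta> \<in> schedules n" "length x = n" for \<Delta> x
    using sched_gen[OF that] .
  have cf: "map P [0..<n] \<in> configs n" for P by (simp add: configs_def)
  have fin: "\<exists>x \<in> configs n. sched_update \<alpha> n \<Delta>1 x \<noteq> sched_update \<alpha> n \<Delta>2 x"
    if "sched_update \<alpha> n \<Delta>1 (map P [0..<n]) ! i \<noteq> sched_update \<alpha> n \<Delta>2 (map P [0..<n]) ! i" for P
  proof -
    have "sched_update \<alpha> n \<Delta>1 (map P [0..<n]) \<noteq> sched_update \<alpha> n \<Delta>2 (map P [0..<n])"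
      using that by auto
    then show ?thesis using cf[of P] by blast
  qed
  have len: "length (map P [0..<n]) = n" for P by simp
  consider "\<alpha> = 28" | "\<alpha> = 44" | "\<alpha> = 140" | "\<alpha> = 32" using a by auto
  then show ?thesis
  proof cases
    case 1
    let ?P = "\<lambda>j. j = prd n (prd n i)"
    have K1': "rk \<Delta>1 (prd n i) < rk \<Delta>1 i" using K1 1 by (simp add: keyv_def)
    have K2': "\<not> rk \<Delta>2 (prd n i) < rk \<Delta>2 i" using K2 1 by (simp add: keyv_def)
    show ?thesis
      apply (rule fin[of ?P])
      using wit28[OF n i G[OF S1 len, of ?P, unfolded 1] G[OF S2 len, of ?P, unfolded 1] K1' K2' refl] 1
      by simp
  next
    case 2
    have K1': "rk \<Delta>1 (prd n i) < rk \<Delta>1 i" using K1 2 by (simp add: keyv_def)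
    have K2': "\<not> rk \<Delta>2 (prd n i) < rk \<Delta>2 i" using K2 2 by (simp add: keyv_def)
    show ?thesis
    proof (cases "rk \<Delta>1 (prd n (prd n i)) < rk \<Delta>1 (prd n i)")
      case False
      let ?P = "\<lambda>j. j = prd n (prd n i) \<or> j = prd n i \<or> j = sc n i"
      show ?thesis
        apply (rule fin[of ?P])
        using wit44A[OF n i G[OF S1 len, of ?P, unfolded 2] G[OF S2 len, of ?P, unfolded 2] K1' K2' False refl] 2
        by simp
    next
      case True
      show ?thesis
      proof (cases "n = 4")
        case True': True
        let ?P = "\<lambda>j. j = prd n i \<or> j = sc n i"
        show ?thesis
          apply (rule fin[of ?P])
          using wit44B[OF True' i G[OF S1 len, of ?P, unfolded 2] G[OF S2 len, of ?P, unfolded 2] K1' K2' True refl] 2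
          by simp
      next
        case False
        then have n4: "4 < n" using n by simp
        let ?P = "\<lambda>j. j = prd n (prd n i) \<or> j = i"
        show ?thesis
          apply (rule fin[of ?P])
          using wit44C[OF n4 i G[OF S1 len, of ?P, unfolded 2] G[OF S2 len, of ?P, unfolded 2] K1' K2' refl] 2
          by simp
      qed
    qed
  next
    case 3
    let ?P = "\<lambda>j. j = prd n i \<or> j = i \<or> j = sc n i"
    have K1': "rk \<Delta>1 (sc n i) < rk \<Delta>1 i" using K1 3 by (simp add: keyv_def)
    have K2': "\<not> rk \<Delta>2 (sc n i) < rk \<Delta>2 i" using K2 3 by (simp add: keyv_def)
    show ?thesis
      apply (rule fin[of ?P])
      using wit140[OF n i G[OF S1 len, of ?P, unfolded 3] G[OF S2 len, of ?P, unfolded 3] K1' K2' refl] 3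
      by simp
  next
    case 4
    let ?P = "\<lambda>j. j = prd n i \<or> j = sc n i"
    have K1': "rk \<Delta>1 (prd n i) < rk \<Delta>1 i \<or> rk \<Delta>1 (sc n i) < rk \<Delta>1 i" using K1 4 by (simp add: keyv_def)
    have K2': "\<not> (rk \<Delta>2 (prd n i) < rk \<Delta>2 i \<or> rk \<Delta>2 (sc n i) < rk \<Delta>2 i)" using K2 4 by (simp add: keyv_def)
    show ?thesis
      apply (rule fin[of ?P])
      using wit32[OF n i G[OF S1 len, of ?P, unfolded 4] G[OF S2 len, of ?P, unfolded 4] K1' K2' refl] 4
      by simp
  qed
qed

definition key :: "nat \<Rightarrow> nat \<Rightarrow> nat set list \<Rightarrow> bool list" where
  "key \<alpha> n \<Delta> = map (keyv \<alpha> n (rk \<Delta>)) [0..<n]"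

lemma dyn_iff:
  assumes a: "\<alpha> \<in> {28, 32, 44, 140}" and n: "3 < n"
    and S1: "\<Delta>1 \<in> schedules n" and S2: "\<Delta>2 \<in> schedules n"
  shows "dynamics \<alpha> n \<Delta>1 = dynamics \<alpha> n \<Delta>2 \<longleftrightarrow> key \<alpha> n \<Delta>1 = key \<alpha> n \<Delta>2"
proof
  assume D: "dynamics \<alpha> n \<Delta>1 = dynamics \<alpha> n \<Delta>2"
  show "key \<alpha> n \<Delta>1 = key \<alpha> n \<Delta>2"
  proof (rule ccontr)
    assume ne: "key \<alpha> n \<Delta>1 \<noteq> key \<alpha> n \<Delta>2"
    have "\<exists>i<n. keyv \<alpha> n (rk \<Delta>1) i \<noteq> keyv \<alpha> n (rk \<Delta>2) i"
    proof (rule ccontr)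
      assume "\<not> (\<exists>i<n. keyv \<alpha> n (rk \<Delta>1) i \<noteq> keyv \<alpha> n (rk \<Delta>2) i)"
      then have "\<forall>i<n. keyv \<alpha> n (rk \<Delta>1) i = keyv \<alpha> n (rk \<Delta>2) i" by blast
      then have "key \<alpha> n \<Delta>1 = key \<alpha> n \<Delta>2" unfolding key_def by (intro nth_equalityI) simp_all
      then show False using ne by blast
    qed
    then obtain i where i: "i < n" "keyv \<alpha> n (rk \<Delta>1) i \<noteq> keyv \<alpha> n (rk \<Delta>2) i" by blast
    have "\<exists>x \<in> configs n. sched_update \<alpha> n \<Delta>1 x \<noteq> sched_update \<alpha> n \<Delta>2 x"
    proof (cases "keyv \<alpha> n (rk \<Delta>1) i")
      case True
      then have "\<not> keyv \<alpha> n (rk \<Delta>2) i" using i(2) by blast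
      then show ?thesis using diff_key[OF a n i(1) S1 S2 True] by blast
    next
      case False
      then have "keyv \<alpha> n (rk \<Delta>2) i" using i(2) by blast
      then have "\<exists>x \<in> configs n. sched_update \<alpha> n \<Delta>2 x \<noteq> sched_update \<alpha> n \<Delta>1 x"
        using diff_key[OF a n i(1) S2 S1 _ False] by blast
      then show ?thesis by (metis (no_types))
    qed
    then obtain x where x: "x \<in> configs n" "sched_update \<alpha> n \<Delta>1 x \<noteq> sched_update \<alpha> n \<Delta>2 x" by blast
    have "(x, sched_update \<alpha> n \<Delta>1 x) \<in> dynamics \<alpha> n \<Delta>1" using x(1) unfolding dynamics_def by blast
    then have "(x, sched_update \<alpha> n \<Delta>1 x) \<in> dynamics \<alpha> n \<Delta>2" using D by simp
    then have "sched_update \<alpha> n \<Delta>1 x = sched_update \<alpha> n \<Delta>2 x" unfolding dynamics_def by blast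
    then show False using x(2) by blast
  qed
next
  assume K: "key \<alpha> n \<Delta>1 = key \<alpha> n \<Delta>2"
  have Ki: "keyv \<alpha> n (rk \<Delta>1) i = keyv \<alpha> n (rk \<Delta>2) i" if "i < n" for i
  proof -
    have "key \<alpha> n \<Delta>1 ! i = key \<alpha> n \<Delta>2 ! i" using K by simp
    then show ?thesis using that unfolding key_def by simp
  qed
  have eq: "sched_update \<alpha> n \<Delta>1 x = sched_update \<alpha> n \<Delta>2 x" if "x \<in> configs n" for x
  proof -
    have lx: "length x = n" using that by (simp add: configs_def)
    show ?thesis by (rule same_key[OF a sched_gen[OF S1 lx] sched_gen[OF S2 lx] Ki])
  qed
  show "dynamics \<alpha> n \<Delta>1 = dynamics \<alpha> n \<Delta>2" unfolding dynamics_def using eq by (metis (no_types, lifting))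
qed

lemma card_eqv:
  assumes "\<And>a b. a \<in> S \<Longrightarrow> b \<in> S \<Longrightarrow> f a = f b \<longleftrightarrow> g a = g b"
  shows "card (f ` S) = card (g ` S)"
proof -
  let ?P = "(\<lambda>a. (f a, g a)) ` S"
  have "f ` S = fst ` ?P" "g ` S = snd ` ?P" by (auto simp: image_image)
  moreover have "inj_on fst ?P" "inj_on snd ?P" using assms by (auto simp: inj_on_def)
  ultimately show ?thesis by (simp add: card_image)
qed

lemma sched_of_rho:
  fixes \<rho> :: "nat \<Rightarrow> nat"
  shows "\<exists>\<Delta> \<in> schedules n. \<forall>a<n. \<forall>b<n. (rk \<Delta> a < rk \<Delta> b \<longleftrightarrow> \<rho> a < \<rho> b)"
proof -
  define vs where "vs = sorted_list_of_set (\<rho> ` {..<n})"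
  define \<Delta> where "\<Delta> = map (\<lambda>v. {i. i < n \<and> \<rho> i = v}) vs"
  have setvs: "set vs = \<rho> ` {..<n}" by (simp add: vs_def)
  have dvs: "distinct vs" and svs: "sorted vs" by (simp_all add: vs_def)
  have S: "\<Delta> \<in> schedules n"
    unfolding schedules_def
  proof (intro CollectI conjI ballI allI impI)
    fix B assume "B \<in> set \<Delta>"
    then obtain v where "v \<in> set vs" "B = {i. i < n \<and> \<rho> i = v}" by (auto simp: \<Delta>_def)
    then show "B \<noteq> {}" using setvs by auto
  next
    fix a b assume ab: "a < length \<Delta>" "b < length \<Delta>" "a \<noteq> b"
    then have "vs ! a \<noteq> vs ! b" using dvs by (simp add: \<Delta>_def nth_eq_iff_index_eq)
    then show "\<Delta> ! a \<inter> \<Delta> ! b = {}" using ab by (auto simp: \<Delta>_def)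
  next
    show "\<Union> (set \<Delta>) = {0..<n}" using setvs by (auto simp: \<Delta>_def)
  qed
  have rkv: "\<exists>a < length vs. rk \<Delta> j = a \<and> vs ! a = \<rho> j" if j: "j < n" for j
  proof -
    have "\<rho> j \<in> set vs" using setvs j by auto
    then obtain a where a: "a < length vs" "vs ! a = \<rho> j" by (metis in_set_conv_nth)
    have "j \<in> \<Delta> ! a" using a j by (simp add: \<Delta>_def)
    then have "rk \<Delta> j = a" using rk_unique[OF S] a by (simp add: \<Delta>_def)
    then show ?thesis using a by blast
  qed
  have mono: "vs ! a < vs ! b \<longleftrightarrow> a < b" if "a < length vs" "b < length vs" for a b
  proof
    assume "vs ! a < vs ! b"
    then show "a < b" using sorted_nth_mono[OF svs, of b a] that by (meson leI not_le)
  next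
    assume "a < b"
    then have "vs ! a \<le> vs ! b" "vs ! a \<noteq> vs ! b" using sorted_nth_mono[OF svs, of a b] that dvs
      by (auto simp: nth_eq_iff_index_eq)
    then show "vs ! a < vs ! b" by simp
  qed
  have "\<forall>a<n. \<forall>b<n. (rk \<Delta> a < rk \<Delta> b \<longleftrightarrow> \<rho> a < \<rho> b)"
  proof (intro allI impI)
    fix a b assume "a < n" "b < n"
    then obtain a' b' where "a' < length vs" "rk \<Delta> a = a'" "vs ! a' = \<rho> a"
      "b' < length vs" "rk \<Delta> b = b'" "vs ! b' = \<rho> b" using rkv by metis
    then show "rk \<Delta> a < rk \<Delta> b \<longleftrightarrow> \<rho> a < \<rho> b" using mono by metis
  qed
  then show ?thesis using S by blast
qed

lemma keyv_cong:
  assumes "\<forall>a<n. \<forall>b<n. (\<rho>1 a < \<rho>1 b \<longleftrightarrow> \<rho>2 a < \<rho>2 b)" "i < n"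
  shows "keyv \<alpha> n \<rho>1 i = keyv \<alpha> n \<rho>2 i"
  using assms prd_lt[OF assms(2)] sc_lt[OF assms(2)] unfolding keyv_def by simp

lemma not_all:
  assumes S: "\<Delta> \<in> schedules n" and n: "0 < n"
  shows "\<exists>i<n. \<not> keyv \<alpha> n (rk \<Delta>) i"
proof -
  let ?M = "rk \<Delta> ` {..<n}"
  have "Min ?M \<in> ?M" using n by (intro Min_in) auto
  then obtain i where i: "i < n" "rk \<Delta> i = Min ?M" by auto
  have "rk \<Delta> i \<le> rk \<Delta> j" if "j < n" for j using i that by simp
  then have "\<not> keyv \<alpha> n (rk \<Delta>) i" using prd_lt[OF i(1)] sc_lt[OF i(1)] unfolding keyv_def
    by (simp add: not_less)
  then show ?thesis using i by blast
qed

lemma pos_L: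
  assumes "j0 < n" "i < n" "i \<noteq> j0"
  shows "0 < (i + n - j0) mod n" "(prd n i + n - j0) mod n = (i + n - j0) mod n - 1"
proof -
  have e1: "(i + n - j0) mod n = (if j0 \<le> i then i - j0 else i + n - j0)"
  proof (cases "j0 \<le> i")
    case True
    then have "i + n - j0 = (i - j0) + n" by simp
    then have "(i + n - j0) mod n = ((i - j0) + n) mod n" by simp
    also have "\<dots> = i - j0" using assms by simp
    finally show ?thesis using True by simp
  next
    case False then show ?thesis using assms by simp
  qed
  have p: "prd n i = (if i = 0 then n - 1 else i - 1)" using assms by (simp add: prd_alt)
  have pl: "prd n i < n" using assms by (simp add: prd_lt)
  have e2: "(prd n i + n - j0) mod n = (if j0 \<le> prd n i then prd n i - j0 else prd n i + n - j0)"
  proof (cases "j0 \<le> prd n i")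
    case True
    then have "prd n i + n - j0 = (prd n i - j0) + n" by simp
    then have "(prd n i + n - j0) mod n = ((prd n i - j0) + n) mod n" by simp
    also have "\<dots> = prd n i - j0" using pl by simp
    finally show ?thesis using True by simp
  next
    case False then show ?thesis using assms by simp
  qed
  show "0 < (i + n - j0) mod n" using e1 assms by auto
  show "(prd n i + n - j0) mod n = (i + n - j0) mod n - 1" using e1 e2 p assms by auto
qed

lemma pos_R:
  assumes "j0 < n" "i < n" "i \<noteq> j0"
  shows "0 < (j0 + n - i) mod n" "(j0 + n - sc n i) mod n = (j0 + n - i) mod n - 1"
proof -
  have e1: "(j0 + n - i) mod n = (if i \<le> j0 then j0 - i else j0 + n - i)"
  proof (cases "i \<le> j0")
    case True
    then have "j0 + n - i = (j0 - i) + n" by simp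
    then have "(j0 + n - i) mod n = ((j0 - i) + n) mod n" by simp
    also have "\<dots> = j0 - i" using assms by simp
    finally show ?thesis using True by simp
  next
    case False then show ?thesis using assms by simp
  qed
  have p: "sc n i = (if i = n - 1 then 0 else i + 1)" using assms by (simp add: sc_alt)
  have pl: "sc n i < n" using assms by (simp add: sc_lt)
  have e2: "(j0 + n - sc n i) mod n = (if sc n i \<le> j0 then j0 - sc n i else j0 + n - sc n i)"
  proof (cases "sc n i \<le> j0")
    case True
    then have "j0 + n - sc n i = (j0 - sc n i) + n" by simp
    then have "(j0 + n - sc n i) mod n = ((j0 - sc n i) + n) mod n" by simp
    also have "\<dots> = j0 - sc n i" using assms by simp
    finally show ?thesis using True by simp
  next
    case False then show ?thesis using assms pl by simp
  qed
  show "0 < (j0 + n - i) mod n" using e1 assms by auto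
  show "(j0 + n - sc n i) mod n = (j0 + n - i) mod n - 1" using e1 e2 p assms by auto
qed

lemma realize:
  assumes a: "\<alpha> \<in> {28, 32, 44, 140}" and len: "length K = n" and j0: "j0 < n" "\<not> K ! j0"
  shows "\<exists>\<Delta> \<in> schedules n. key \<alpha> n \<Delta> = K"
proof -
  define \<rho> where "\<rho> i = (if K ! i then (if \<alpha> = 140 then (j0 + n - i) mod n else (i + n - j0) mod n) else 0)" for i
  have kv: "keyv \<alpha> n \<rho> i = K ! i" if i: "i < n" for i
  proof (cases "K ! i")
    case False
    then show ?thesis by (simp add: keyv_def \<rho>_def)
  next
    case True
    then have ij: "i \<noteq> j0" using j0 by auto
    show ?thesis
    proof (cases "\<alpha> = 140")
      case True': True
      have "\<rho> (sc n i) < \<rho> i" using pos_R[OF j0(1) i ij] True True' by (simp add: \<rho>_def)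
      then show ?thesis using True True' by (simp add: keyv_def)
    next
      case False
      have "\<rho> (prd n i) < \<rho> i" using pos_L[OF j0(1) i ij] True False by (simp add: \<rho>_def)
      then show ?thesis using True False by (simp add: keyv_def)
    qed
  qed
  obtain \<Delta> where S: "\<Delta> \<in> schedules n" and ord: "\<forall>a<n. \<forall>b<n. (rk \<Delta> a < rk \<Delta> b \<longleftrightarrow> \<rho> a < \<rho> b)"
    using sched_of_rho by blast
  have "key \<alpha> n \<Delta> = K"
    unfolding key_def using keyv_cong[OF ord] kv len by (intro nth_equalityI) auto
  then show ?thesis using S by blast
qed

lemma key_range:
  assumes a: "\<alpha> \<in> {28, 32, 44, 140}" and n: "0 < n"
  shows "key \<alpha> n ` schedules n = {K. length K = n} - {replicate n True}"
proof
  show "key \<alpha> n ` schedules n \<subseteq> {K. length K = n} - {replicate n True}"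
  proof
    fix K assume "K \<in> key \<alpha> n ` schedules n"
    then obtain \<Delta> where S: "\<Delta> \<in> schedules n" and K: "K = key \<alpha> n \<Delta>" by blast
    obtain i where "i < n" "\<not> keyv \<alpha> n (rk \<Delta>) i" using not_all[OF S n] by blast
    then have "K ! i = False" using K by (simp add: key_def)
    then have "K \<noteq> replicate n True" using \<open>i < n\<close> by auto
    then show "K \<in> {K. length K = n} - {replicate n True}" using K by (simp add: key_def)
  qed
next
  show "{K. length K = n} - {replicate n True} \<subseteq> key \<alpha> n ` schedules n"
  proof
    fix K assume K: "K \<in> {K. length K = n} - {replicate n True}"
    then have len: "length K = n" and nr: "K \<noteq> replicate n True" by auto
    have "\<exists>j0<n. \<not> K ! j0"
    proof (rule ccontr)
      assume "\<not> (\<exists>j0<n. \<not> K ! j0)"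
      then have "K = replicate n True" using len by (intro nth_equalityI) auto
      then show False using nr by simp
    qed
    then obtain j0 where "j0 < n" "\<not> K ! j0" by blast
    then show "K \<in> key \<alpha> n ` schedules n" using realize[OF a len] by blast
  qed
qed

lemma card_keys: "card ({K :: bool list. length K = n} - {replicate n True}) = 2 ^ n - 1"
proof -
  have "card {K :: bool list. set K \<subseteq> UNIV \<and> length K = n} = 2 ^ n"
    using card_lists_length_eq[of "UNIV :: bool set" n] by simp
  then have c: "card {K :: bool list. length K = n} = 2 ^ n" by simp
  have f: "finite {K :: bool list. length K = n}"
    using finite_lists_length_eq[of "UNIV :: bool set" n] by simp
  show ?thesis using c f by (simp add: card_Diff_singleton)
qed

theorem mainTheorem5:
  fixes n \<alpha> :: nat
  assumes "n > 3" and "\<alpha> \<in> {28, 32, 44, 140}"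
  shows "sensitivity \<alpha> n = (2 ^ n - 1) / (3 ^ n - 2 ^ (n + 1) + 2)"
proof -
  have "card (all_dynamics \<alpha> n) = card (key \<alpha> n ` schedules n)"
    unfolding all_dynamics_def using dyn_iff[OF assms(2) assms(1)] by (intro card_eqv) blast
  also have "\<dots> = 2 ^ n - 1" using key_range[OF assms(2)] assms(1) card_keys by simp
  finally have c: "card (all_dynamics \<alpha> n) = 2 ^ n - 1" .
  have "real (2 ^ n - 1 :: nat) = 2 ^ n - 1" by (simp add: of_nat_diff)
  then show ?thesis unfolding sensitivity_def c by simp
qed

end
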